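(* Let $M$ be the blow-up of $\mathbb{CP}_2$ at two distinct points (so $c_1^2=7$), with Kähler cone $\mathcal K\subset H^2(M,\mathbb R)$. Let $\check{\mathcal K}=\mathcal K/\mathbb R^+$ be its quotient under positive scalar multiplication. For $t\in\mathbb R$, let $\mathbf Y_t\subset\check{\mathcal K}$ be the set of classes with $\mathcal T(\Omega)=(c_1\cdot\Omega)^2/\Omega^2\le t$; note that $\mathcal T$ is homogeneous of degree $0$ and so descends to $\check{\mathcal K}$. If $7<t<8$, then $\mathbf Y_t$ is homeomorphic to the closed unit $2$-disk; in particular, it is compact.
   Context: The Kähler cone is the set of cohomology classes of Kähler forms compatible with the complex structure. Products of classes denote the intersection pairing. *)

theory Defs
  imports "HOL-Analysis.Analysis"
begin

text \<open>Model of H^2(M,R) for M = blow-up of CP^2 at two distinct points.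
  A class is written in the basis (H, E1, E2): the vector x stands for
  x$1 H + x$2 E1 + x$3 E2, where H is the hyperplane class and E1, E2 the
  exceptional classes.  Intersection pairing: H.H = 1, Ei.Ei = -1, all
  mixed products 0.\<close>

definition cls :: "real \<Rightarrow> real \<Rightarrow> real \<Rightarrow> real^3" where
  "cls a e1 e2 = vector [a, e1, e2]"

definition ipair :: "real^3 \<Rightarrow> real^3 \<Rightarrow> real" where
  "ipair x y = x$1 * y$1 - x$2 * y$2 - x$3 * y$3"

definition hyp :: "real^3" where "hyp = cls 1 0 0"
definition exc1 :: "real^3" where "exc1 = cls 0 1 0"
definition exc2 :: "real^3" where "exc2 = cls 0 0 1"

definition chern1 :: "real^3" where "chern1 = cls 3 (-1) (-1)"

text \<open>Kaehler cone: classes positive on the three (-1)-curves E1, E2 and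
  H - E1 - E2, which generate the effective cone (Nakai-Moishezon /
  Kleiman criterion for this del Pezzo surface).\<close>
definition kahler_cone :: "(real^3) set" where
  "kahler_cone = {w. ipair w exc1 > 0 \<and> ipair w exc2 > 0 \<and>
                     ipair w (hyp - exc1 - exc2) > 0}"

definition calT :: "real^3 \<Rightarrow> real" where
  "calT w = (ipair chern1 w)^2 / ipair w w"

definition ray_rel :: "((real^3) \<times> (real^3)) set" where
  "ray_rel = {(x, y). x \<in> kahler_cone \<and> y \<in> kahler_cone \<and> (\<exists>c>0. y = c *\<^sub>R x)}"

definition kcheck :: "(real^3) set set" where
  "kcheck = kahler_cone // ray_rel"

definition kcheck_top :: "(real^3) set topology" where
  "kcheck_top = topology (\<lambda>U. U \<subseteq> kcheck \<and>
      openin (top_of_set kahler_cone) (\<Union>U))"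

definition Yt :: "real \<Rightarrow> (real^3) set set" where
  "Yt t = {C \<in> kcheck. \<forall>w\<in>C. calT w \<le> t}"

end

theory Submission imports Defs begin

lemma K_iff: "w \<in> kahler_cone \<longleftrightarrow> w$2 < 0 \<and> w$3 < 0 \<and> w$1 + w$2 + w$3 > 0"
  by (simp add: kahler_cone_def ipair_def exc1_def exc2_def hyp_def cls_def)

lemma K_pos1: "w \<in> kahler_cone \<Longrightarrow> w$1 > 0"
  by (simp add: K_iff)

lemma K_scale: "w \<in> kahler_cone \<Longrightarrow> c > 0 \<Longrightarrow> c *\<^sub>R w \<in> kahler_cone"
proof -
  assume a: "w \<in> kahler_cone" "c > 0"
  hence "c * (w$1 + w$2 + w$3) > 0" by (simp add: K_iff)
  thus ?thesis using a by (auto simp: K_iff mult_pos_neg algebra_simps)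
qed

lemma ipair_pos: "w \<in> kahler_cone \<Longrightarrow> ipair w w > 0"
proof -
  assume "w \<in> kahler_cone"
  hence a: "w$2 < 0" "w$3 < 0" "w$1 + w$2 + w$3 > 0" by (auto simp: K_iff)
  have "(w$1)^2 > (-(w$2) + -(w$3))^2" using a
    by (intro power_strict_mono) auto
  moreover have "(-(w$2) + -(w$3))^2 \<ge> (w$2)^2 + (w$3)^2"
    using mult_neg_neg[OF a(1) a(2)] by (simp add: power2_eq_square algebra_simps)
  ultimately show ?thesis by (simp add: ipair_def power2_eq_square)
qed

lemma calT_scale: "w \<in> kahler_cone \<Longrightarrow> c \<noteq> 0 \<Longrightarrow> calT (c *\<^sub>R w) = calT w"
proof -
  assume a: "w \<in> kahler_cone" "c \<noteq> 0"
  have 1: "ipair (c *\<^sub>R w) (c *\<^sub>R w) = c^2 * ipair w w" by (simp add: ipair_def power2_eq_square algebra_simps)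
  have 2: "ipair chern1 (c *\<^sub>R w) = c * ipair chern1 w" by (simp add: ipair_def algebra_simps)
  show ?thesis using a by (simp add: calT_def 1 2 power_mult_distrib)
qed


lemma ray_class: "w \<in> kahler_cone \<Longrightarrow> ray_rel``{w} = {y. \<exists>c>0. y = c *\<^sub>R w}"
  by (auto simp: ray_rel_def K_scale)

lemma kcheck_iff: "C \<in> kcheck \<longleftrightarrow> (\<exists>w\<in>kahler_cone. C = ray_rel``{w})"
  unfolding kcheck_def quotient_def by blast

lemma self_in: "w \<in> kahler_cone \<Longrightarrow> w \<in> ray_rel``{w}"
  by (auto simp: ray_class intro: exI[of _ 1])

lemma class_sub: "ray_rel``{w} \<subseteq> kahler_cone"
  by (auto simp: ray_rel_def)

lemma class_eq:
  assumes w: "w \<in> kahler_cone" and y: "y \<in> ray_rel``{w}"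
  shows "ray_rel``{y} = ray_rel``{w}"
proof -
  obtain c where c: "c > 0" "y = c *\<^sub>R w" using y w by (auto simp: ray_class)
  have yK: "y \<in> kahler_cone" using c w K_scale by auto
  show ?thesis
  proof
    show "ray_rel``{y} \<subseteq> ray_rel``{w}"
    proof
      fix z assume "z \<in> ray_rel``{y}"
      then obtain d where "d > 0" "z = d *\<^sub>R y" using yK by (auto simp: ray_class)
      thus "z \<in> ray_rel``{w}" using c w by (auto simp: ray_class intro!: exI[of _ "d*c"])
    qed
  next
    show "ray_rel``{w} \<subseteq> ray_rel``{y}"
    proof
      fix z assume "z \<in> ray_rel``{w}"
      then obtain d where "d > 0" "z = d *\<^sub>R w" using w by (auto simp: ray_class)
      thus "z \<in> ray_rel``{y}" using c yK by (auto simp: ray_class intro!: exI[of _ "d/c"])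
    qed
  qed
qed

lemma in_class_eq: "C \<in> kcheck \<Longrightarrow> x \<in> C \<Longrightarrow> x \<in> kahler_cone \<and> C = ray_rel``{x}"
proof -
  assume C: "C \<in> kcheck" and x: "x \<in> C"
  then obtain w where w: "w \<in> kahler_cone" "C = ray_rel``{w}" unfolding kcheck_iff by blast
  have "x \<in> kahler_cone" using x w(2) class_sub by blast
  moreover have "ray_rel``{x} = ray_rel``{w}" using class_eq[OF w(1)] x w(2) by simp
  ultimately show ?thesis using w(2) by simp
qed

lemma Union_kcheck: "\<Union>kcheck = kahler_cone"
proof
  show "\<Union>kcheck \<subseteq> kahler_cone" using in_class_eq by blast
  show "kahler_cone \<subseteq> \<Union>kcheck"
  proof
    fix w assume "w \<in> kahler_cone"
    hence "ray_rel``{w} \<in> kcheck" "w \<in> ray_rel``{w}" using kcheck_iff self_in by auto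
    thus "w \<in> \<Union>kcheck" by blast
  qed
qed

lemma istop: "istopology (\<lambda>U. U \<subseteq> kcheck \<and> openin (top_of_set kahler_cone) (\<Union>U))"
  unfolding istopology_def
proof (rule conjI; intro allI impI)
  fix S T assume S: "S \<subseteq> kcheck \<and> openin (top_of_set kahler_cone) (\<Union>S)"
    and T: "T \<subseteq> kcheck \<and> openin (top_of_set kahler_cone) (\<Union>T)"
  have "\<Union>(S \<inter> T) = \<Union>S \<inter> \<Union>T"
  proof
    show "\<Union>S \<inter> \<Union>T \<subseteq> \<Union>(S \<inter> T)"
    proof
      fix x assume "x \<in> \<Union>S \<inter> \<Union>T"
      then obtain A B where "A \<in> S" "B \<in> T" "x \<in> A" "x \<in> B" by auto
      moreover have "A \<in> kcheck" "B \<in> kcheck" using calculation S T by auto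
      moreover have "A = B" using calculation in_class_eq by metis
      ultimately show "x \<in> \<Union>(S \<inter> T)" by auto
    qed
  qed auto
  thus "S \<inter> T \<subseteq> kcheck \<and> openin (top_of_set kahler_cone) (\<Union>(S \<inter> T))"
    using S T by auto
next
  fix KK assume a: "\<forall>K\<in>KK. K \<subseteq> kcheck \<and> openin (top_of_set kahler_cone) (\<Union>K)"
  have "\<Union>(\<Union>KK) = \<Union>(Union ` KK)" by auto
  show "\<Union>KK \<subseteq> kcheck \<and> openin (top_of_set kahler_cone) (\<Union>(\<Union>KK))"
  proof
    show "\<Union>KK \<subseteq> kcheck" using a by auto
    have "openin (top_of_set kahler_cone) (\<Union>(Union ` KK))"
      by (rule openin_Union) (use a in auto)
    thus "openin (top_of_set kahler_cone) (\<Union>(\<Union>KK))" using \<open>\<Union>(\<Union>KK) = \<Union>(Union ` KK)\<close> by simp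
  qed
qed

lemma openin_kcheck: "openin kcheck_top U \<longleftrightarrow> U \<subseteq> kcheck \<and> openin (top_of_set kahler_cone) (\<Union>U)"
  unfolding kcheck_top_def using istop by simp

lemma topspace_kcheck: "topspace kcheck_top = kcheck"
proof -
  have "openin kcheck_top kcheck" by (simp add: openin_kcheck Union_kcheck)
  moreover have "topspace kcheck_top \<subseteq> kcheck" using openin_topspace[of kcheck_top] openin_kcheck by blast
  ultimately show ?thesis using openin_subset by blast
qed

definition FF :: "real \<Rightarrow> real^2 \<Rightarrow> real" where
  "FF t v = (3 + v$1 + v$2)^2 + t * ((v$1)^2 + (v$2)^2)"

definition EE :: "real \<Rightarrow> (real^2) set" where
  "EE t = {v. FF t v \<le> t}"

lemma FF_cont: "continuous_on S (FF t)"
  unfolding FF_def by (intro continuous_intros)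

lemma EE_neg1:
  fixes x y t :: real
  assumes "7 < t" "t < 8" "(3 + x + y)^2 + t * (x^2 + y^2) \<le> t"
  shows "x < 0"
proof (rule ccontr)
  assume "\<not> x < 0" hence x: "x \<ge> 0" by simp
  have id: "(1+t) * ((3+x+y)^2 + t*y^2) - t*(3+x)^2 = (3+x+(1+t)*y)^2"
    by (simp add: power2_eq_square algebra_simps)
  have "(1+t) * ((3+x+y)^2 + t*y^2) \<le> (1+t) * (t - t*x^2)"
    using assms by (intro mult_left_mono) (auto simp: algebra_simps)
  hence "t*(3+x)^2 \<le> (1+t) * (t - t*x^2)" using id by (smt (verit) zero_le_power2)
  hence "t*(3+x)^2 \<le> t * ((1+t) * (1 - x^2))" by (simp add: algebra_simps)
  hence "(3+x)^2 \<le> (1+t) * (1 - x^2)" using assms by simp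
  moreover have "(1+t) * (1 - x^2) \<le> 1 + t" using assms
    by (simp add: algebra_simps mult_nonneg_nonneg)
  moreover have "(3+x)^2 \<ge> 9" using x by (simp add: power2_eq_square algebra_simps)
  ultimately show False using assms by simp
qed

lemma EE_sum:
  fixes x y t :: real
  assumes "7 < t" "t < 8" "(3 + x + y)^2 + t * (x^2 + y^2) \<le> t"
  shows "1 + x + y > 0"
proof (rule ccontr)
  define s where "s = x + y"
  assume "\<not> 1 + x + y > 0" hence s: "s \<le> -1" by (simp add: s_def)
  have "x^2 + y^2 \<ge> s^2/2" unfolding s_def
    using zero_le_power2[of "x - y"] by (simp add: power2_eq_square algebra_simps)
  hence "(3 + s)^2 + t * (s^2/2) \<le> t" using assms unfolding s_def
    by (smt (verit) mult_left_mono)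
  moreover have "(3 + s)^2 + t * (s^2/2) - (4 + t/2) = (s+1) * ((s+5) + t*(s-1)/2)"
    by (simp add: power2_eq_square field_simps)
  moreover have "(s+5) + t*(s-1)/2 \<le> 4 - t"
  proof -
    have "t*(s-1) \<le> t*(-2)" using s assms by (intro mult_left_mono) auto
    thus ?thesis using s by simp
  qed
  moreover have "(s+1) * ((s+5) + t*(s-1)/2) \<ge> 0"
    using calculation(3) s assms by (intro mult_nonpos_nonpos) auto
  ultimately show False using assms by simp
qed

lemma EE_bound:
  fixes x y t :: real
  assumes "7 < t" "(3 + x + y)^2 + t * (x^2 + y^2) \<le> t"
  shows "x^2 + y^2 \<le> 1"
proof -
  have "t * (x^2 + y^2) \<le> t * 1" using assms zero_le_power2[of "3+x+y"] by linarith
  moreover have "0 < t" using assms by simp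
  ultimately show ?thesis using mult_le_cancel_left_pos by blast
qed

lemma EE_compact: "7 < t \<Longrightarrow> compact (EE t)"
  unfolding compact_eq_bounded_closed
proof (rule conjI[rotated])
  assume t: "7 < t"
  show "closed (EE t)" unfolding EE_def
    by (intro closed_Collect_le FF_cont continuous_intros)
  have "EE t \<subseteq> cball 0 1"
  proof
    fix v assume "v \<in> EE t"
    hence "(v$1)^2 + (v$2)^2 \<le> 1" using EE_bound[OF t] by (auto simp: EE_def FF_def)
    hence "v \<bullet> v \<le> 1" by (simp add: inner_vec_def sum_2 power2_eq_square)
    hence "norm v \<le> 1" by (simp add: norm_eq_sqrt_inner)
    thus "v \<in> cball 0 1" by simp
  qed
  thus "bounded (EE t)" using bounded_cball bounded_subset by blast
qed

lemma EE_convex: "0 \<le> t \<Longrightarrow> convex (EE t)"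
  unfolding convex_def
proof (intro ballI allI impI)
  fix x y :: "real^2" and u v :: real
  assume t: "0 \<le> t" and x: "x \<in> EE t" and y: "y \<in> EE t" and uv: "0 \<le> u" "0 \<le> v" "u + v = 1"
  define d1 where "d1 = x$1 - y$1"
  define d2 where "d2 = x$2 - y$2"
  have v: "v = 1 - u" using uv by simp
  have "FF t (u *\<^sub>R x + v *\<^sub>R y) = u * FF t x + v * FF t y - u * v * ((d1 + d2)^2 + t * (d1^2 + d2^2))"
    unfolding FF_def d1_def d2_def v by (simp add: power2_eq_square algebra_simps)
  moreover have "u * v * ((d1 + d2)^2 + t * (d1^2 + d2^2)) \<ge> 0" using uv t by simp
  moreover have "u * FF t x + v * FF t y \<le> u * t + v * t"
    using x y uv by (intro add_mono mult_left_mono) (auto simp: EE_def)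
  moreover have "u * t + v * t = t" using uv by (metis distrib_right mult_1)
  ultimately have "FF t (u *\<^sub>R x + v *\<^sub>R y) \<le> t" by linarith
  thus "u *\<^sub>R x + v *\<^sub>R y \<in> EE t" by (simp add: EE_def)
qed

lemma EE_affdim:
  assumes "7 < t"
  shows "aff_dim (EE t) = 2"
proof -
  define c :: "real^2" where "c = vector [-1/3, -1/3]"
  have o: "open {v. FF t v < t}" by (intro open_Collect_less FF_cont continuous_intros)
  have "FF t c < t" using assms by (simp add: FF_def c_def power2_eq_square)
  hence "c \<in> interior (EE t)" using o
    by (intro interior_maximal[THEN subsetD, of "{v. FF t v < t}"]) (auto simp: EE_def)
  hence "UNIV \<inter> interior (EE t) \<noteq> {}" by blast
  hence "aff_dim (UNIV \<inter> EE t) = aff_dim (UNIV :: (real^2) set)"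
    by (intro aff_dim_convex_Int_nonempty_interior) auto
  thus ?thesis by simp
qed

lemma EE_homeo: "7 < t \<Longrightarrow> EE t homeomorphic (cball (0::real^2) 1)"
  by (intro homeomorphic_convex_compact_sets EE_convex EE_compact)
     (auto simp: EE_affdim aff_dim_cball)


definition emb :: "real^2 \<Rightarrow> real^3" where
  "emb v = (\<chi> i. if i = 1 then 1 else if i = 2 then v$1 else v$2)"

definition nrm :: "real^3 \<Rightarrow> real^2" where
  "nrm w = (\<chi> i. if i = 1 then w$2 / w$1 else w$3 / w$1)"

lemma emb_simps [simp]: "emb v $ 1 = 1" "emb v $ 2 = v$1" "emb v $ 3 = v$2"
  by (simp_all add: emb_def)

lemma nrm_simps [simp]: "nrm w $ 1 = w$2 / w$1" "nrm w $ 2 = w$3 / w$1"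
  by (simp_all add: nrm_def)

lemma nrm_emb [simp]: "nrm (emb v) = v"
  by (simp add: vec_eq_iff forall_2)

lemma emb_cont: "continuous_on S emb"
  unfolding emb_def
proof (rule continuous_on_vec_lambda)
  fix i :: 3
  show "continuous_on S (\<lambda>x::real^2. if i = 1 then 1 else if i = 2 then x $ 1 else x $ 2)"
    by (cases "i = 1"; cases "i = 2") (auto intro!: continuous_intros)
qed

lemma nrm_cont: "continuous_on kahler_cone nrm"
  unfolding nrm_def
proof (rule continuous_on_vec_lambda)
  fix i :: 2
  show "continuous_on kahler_cone (\<lambda>x::real^3. if i = 1 then x $ 2 / x $ 1 else x $ 3 / x $ 1)"
    by (cases "i = 1") (auto intro!: continuous_intros dest: K_pos1)
qed

lemma nrm_scale: "w \<in> kahler_cone \<Longrightarrow> c > 0 \<Longrightarrow> nrm (c *\<^sub>R w) = nrm w"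
  using K_pos1[of w] by (simp add: vec_eq_iff forall_2)

lemma K_decomp: "w \<in> kahler_cone \<Longrightarrow> w = w$1 *\<^sub>R emb (nrm w)"
  using K_pos1[of w] by (simp add: vec_eq_iff forall_3)

lemma EE_K:
  assumes "7 < t" "t < 8" "v \<in> EE t"
  shows "emb v \<in> kahler_cone"
proof -
  have f: "(3 + v$1 + v$2)^2 + t * ((v$1)^2 + (v$2)^2) \<le> t" using assms by (simp add: EE_def FF_def)
  have "v$1 < 0" using EE_neg1[OF assms(1,2) f] .
  moreover have "v$2 < 0" using EE_neg1[OF assms(1,2), of "v$2" "v$1"] f by (simp add: algebra_simps)
  moreover have "1 + v$1 + v$2 > 0" using EE_sum[OF assms(1,2) f] .
  ultimately show ?thesis by (simp add: K_iff)
qed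

lemma calT_emb:
  assumes "emb v \<in> kahler_cone"
  shows "calT (emb v) \<le> t \<longleftrightarrow> FF t v \<le> t"
proof -
  have d: "ipair (emb v) (emb v) > 0" using ipair_pos[OF assms] .
  have e1: "ipair (emb v) (emb v) = 1 - ((v$1)^2 + (v$2)^2)" by (simp add: ipair_def power2_eq_square)
  have e2: "ipair chern1 (emb v) = 3 + v$1 + v$2" by (simp add: ipair_def chern1_def cls_def)
  have "calT (emb v) \<le> t \<longleftrightarrow> (3 + v$1 + v$2)^2 \<le> t * (1 - ((v$1)^2 + (v$2)^2))"
    unfolding calT_def e2 using d e1 by (simp add: pos_divide_le_eq mult.commute)
  also have "\<dots> \<longleftrightarrow> FF t v \<le> t" by (simp add: FF_def algebra_simps)
  finally show ?thesis .
qed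

lemma nrm_inv:
  assumes w: "w \<in> kahler_cone" shows "(1 / w$1) *\<^sub>R w = emb (nrm w)"
proof -
  have "(1 / w$1) *\<^sub>R w = (1 / w$1) *\<^sub>R (w$1 *\<^sub>R emb (nrm w))"
    using K_decomp[OF w] by (rule arg_cong)
  also have "\<dots> = emb (nrm w)" using K_pos1[OF w] by simp
  finally show ?thesis .
qed

lemma calT_nrm: "w \<in> kahler_cone \<Longrightarrow> calT (emb (nrm w)) = calT w"
proof -
  assume w: "w \<in> kahler_cone"
  have "calT (emb (nrm w)) = calT ((1 / w$1) *\<^sub>R w)" using nrm_inv[OF w] by simp
  also have "\<dots> = calT w" using calT_scale[OF w] K_pos1[OF w] by simp
  finally show ?thesis .
qed

definition gmap :: "real^2 \<Rightarrow> (real^3) set" where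
  "gmap v = ray_rel``{emb v}"

definition hmap :: "(real^3) set \<Rightarrow> real^2" where
  "hmap C = nrm (SOME w. w \<in> C)"

lemma hmap_ray: "w \<in> kahler_cone \<Longrightarrow> hmap (ray_rel``{w}) = nrm w"
proof -
  assume w: "w \<in> kahler_cone"
  have "(SOME y. y \<in> ray_rel``{w}) \<in> ray_rel``{w}" using self_in[OF w] by (rule someI)
  then obtain c where "c > 0" "(SOME y. y \<in> ray_rel``{w}) = c *\<^sub>R w" using w by (auto simp: ray_class)
  thus ?thesis using w by (simp add: hmap_def nrm_scale)
qed

lemma main_homeo:
  assumes t: "7 < t" "t < 8"
  shows "homeomorphic_maps (top_of_set (EE t)) (subtopology kcheck_top (Yt t)) gmap hmap"
proof -
  let ?E = "EE t" and ?Y = "Yt t" and ?K = kahler_cone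
  have Ysub: "?Y \<subseteq> kcheck" by (auto simp: Yt_def)
  have tsY: "topspace (subtopology kcheck_top ?Y) = ?Y"
    using Ysub by (simp add: topspace_kcheck Int_absorb1)
  have embK: "\<And>v. v \<in> ?E \<Longrightarrow> emb v \<in> ?K" using EE_K[OF t] by blast
  have gY: "\<And>v. v \<in> ?E \<Longrightarrow> gmap v \<in> ?Y"
  proof -
    fix v assume v: "v \<in> ?E"
    have K: "emb v \<in> ?K" using embK v .
    have "calT (emb v) \<le> t" using calT_emb[OF K] v by (simp add: EE_def)
    moreover have "\<forall>w\<in>gmap v. calT w = calT (emb v)"
      using K by (auto simp: gmap_def ray_class calT_scale)
    ultimately show "gmap v \<in> ?Y" using K by (auto simp: Yt_def gmap_def kcheck_iff)
  qed
  have hE: "\<And>C. C \<in> ?Y \<Longrightarrow> hmap C \<in> ?E \<and> gmap (hmap C) = C"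
  proof -
    fix C assume C: "C \<in> ?Y"
    then obtain w where w: "w \<in> ?K" "C = ray_rel``{w}" by (auto simp: Yt_def kcheck_iff)
    have h: "hmap C = nrm w" using hmap_ray w by simp
    have "calT w \<le> t" using C w self_in by (auto simp: Yt_def)
    hence "calT (emb (nrm w)) \<le> t" using calT_nrm w by simp
    moreover have ee: "(1 / w$1) *\<^sub>R w = emb (nrm w)"
    proof -
      have "(1 / w$1) *\<^sub>R w = (1 / w$1) *\<^sub>R (w$1 *\<^sub>R emb (nrm w))"
        using K_decomp[OF w(1)] by (rule arg_cong)
      also have "\<dots> = emb (nrm w)" using K_pos1[OF w(1)] by simp
      finally show ?thesis .
    qed
    have eK: "emb (nrm w) \<in> ?K"
      using K_pos1[OF w(1)] K_scale[OF w(1), of "1 / w$1"] ee by simp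
    ultimately have "hmap C \<in> ?E" using calT_emb h by (simp add: EE_def)
    moreover have "emb (nrm w) \<in> ray_rel``{w}"
      unfolding ray_class[OF w(1)] using ee K_pos1[OF w(1)]
      by (intro CollectI exI[of _ "1 / w$1"]) simp
    hence "gmap (hmap C) = C" using class_eq[OF w(1)] w h by (simp add: gmap_def)
    ultimately show "hmap C \<in> ?E \<and> gmap (hmap C) = C" by simp
  qed
  have hg: "\<And>v. v \<in> ?E \<Longrightarrow> hmap (gmap v) = v"
    using embK hmap_ray by (simp add: gmap_def)
  have cg: "continuous_map (top_of_set ?E) kcheck_top gmap"
    unfolding continuous_map_def
  proof (intro conjI allI impI)
    show "gmap \<in> topspace (top_of_set ?E) \<rightarrow> topspace kcheck_top"
      using gY Ysub by (auto simp: topspace_kcheck)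
    fix U assume U: "openin kcheck_top U"
    hence U1: "U \<subseteq> kcheck" "openin (top_of_set ?K) (\<Union>U)" by (auto simp: openin_kcheck)
    have "{x \<in> topspace (top_of_set ?E). gmap x \<in> U} = ?E \<inter> emb -` (\<Union>U)"
    proof (intro set_eqI iffI)
      fix x assume "x \<in> {x \<in> topspace (top_of_set ?E). gmap x \<in> U}"
      hence x: "x \<in> ?E" "gmap x \<in> U" by auto
      thus "x \<in> ?E \<inter> emb -` (\<Union>U)" using self_in[OF embK[OF x(1)]] by (auto simp: gmap_def)
    next
      fix x assume "x \<in> ?E \<inter> emb -` (\<Union>U)"
      then obtain C where x: "x \<in> ?E" "C \<in> U" "emb x \<in> C" by auto
      have "C \<in> kcheck" using x U1 by blast
      hence "C = gmap x" unfolding gmap_def using in_class_eq x(3) by blast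
      thus "x \<in> {x \<in> topspace (top_of_set ?E). gmap x \<in> U}" using x by simp
    qed
    moreover have "openin (top_of_set ?E) (?E \<inter> emb -` (\<Union>U))"
      using emb_cont embK U1(2) by (intro continuous_openin_preimage) auto
    ultimately show "openin (top_of_set ?E) {x \<in> topspace (top_of_set ?E). gmap x \<in> U}" by simp
  qed
  have ch: "continuous_map (subtopology kcheck_top ?Y) euclidean hmap"
    unfolding continuous_map_def
  proof (intro conjI allI impI)
    show "hmap \<in> topspace (subtopology kcheck_top ?Y) \<rightarrow> topspace euclidean" by simp
    fix U :: "(real^2) set" assume "openin euclidean U"
    hence oU: "open U" by simp
    define V where "V = {C \<in> kcheck. hmap C \<in> U}"
    have "\<Union>V = ?K \<inter> nrm -` U"
    proof (intro set_eqI iffI)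
      fix x assume "x \<in> \<Union>V"
      then obtain C where C: "C \<in> kcheck" "hmap C \<in> U" "x \<in> C" by (auto simp: V_def)
      have xC: "x \<in> ?K" "C = ray_rel``{x}" using in_class_eq C(1,3) by blast+
      have "hmap C = nrm x" using hmap_ray[OF xC(1)] xC(2) by simp
      thus "x \<in> ?K \<inter> nrm -` U" using C xC by simp
    next
      fix x assume x: "x \<in> ?K \<inter> nrm -` U"
      hence "ray_rel``{x} \<in> V" using hmap_ray by (auto simp: V_def kcheck_iff)
      moreover have "x \<in> ray_rel``{x}" using self_in x by simp
      ultimately show "x \<in> \<Union>V" by (rule UnionI)
    qed
    moreover have "openin (top_of_set ?K) (?K \<inter> nrm -` U)"
      using nrm_cont oU by (intro continuous_openin_preimage[where T=UNIV]) auto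
    ultimately have "openin kcheck_top V" by (simp add: openin_kcheck V_def)
    moreover have "{x \<in> topspace (subtopology kcheck_top ?Y). hmap x \<in> U} = V \<inter> ?Y"
      using tsY Ysub by (auto simp: V_def)
    ultimately show "openin (subtopology kcheck_top ?Y) {x \<in> topspace (subtopology kcheck_top ?Y). hmap x \<in> U}"
      by (auto simp: openin_subtopology)
  qed
  show ?thesis
    unfolding homeomorphic_maps_def
  proof (intro conjI ballI)
    show "continuous_map (top_of_set ?E) (subtopology kcheck_top ?Y) gmap"
      using cg gY by (auto simp: continuous_map_in_subtopology)
    show "continuous_map (subtopology kcheck_top ?Y) (top_of_set ?E) hmap"
      using ch hE tsY by (auto simp: continuous_map_in_subtopology)
    fix x assume "x \<in> topspace (top_of_set ?E)"
    thus "hmap (gmap x) = x" using hg by simp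
  next
    fix y assume "y \<in> topspace (subtopology kcheck_top ?Y)"
    thus "gmap (hmap y) = y" using hE tsY by simp
  qed
qed

theorem lemma1:
  fixes t :: real
  assumes "7 < t" and "t < 8"
  shows "subtopology kcheck_top (Yt t) homeomorphic_space
           top_of_set (cball (0::real^2) 1)
         \<and> compactin kcheck_top (Yt t)"
proof
  have 1: "subtopology kcheck_top (Yt t) homeomorphic_space top_of_set (EE t)"
    using main_homeo[OF assms] homeomorphic_maps_imp_homeomorphic_space homeomorphic_space_sym by blast
  obtain f g where fg: "homeomorphism (EE t) (cball (0::real^2) 1) f g"
    using EE_homeo[OF assms(1)] unfolding homeomorphic_def by blast
  hence "homeomorphic_maps (top_of_set (EE t)) (top_of_set (cball (0::real^2) 1)) f g"
    unfolding homeomorphic_maps_def homeomorphism_def continuous_map_subtopology_eu by auto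
  hence "top_of_set (EE t) homeomorphic_space top_of_set (cball (0::real^2) 1)"
    by (rule homeomorphic_maps_imp_homeomorphic_space)
  thus 2: "subtopology kcheck_top (Yt t) homeomorphic_space top_of_set (cball (0::real^2) 1)"
    using 1 homeomorphic_space_trans by blast
  have "compact_space (top_of_set (cball (0::real^2) 1))"
    by (simp add: compact_space_def compactin_subtopology)
  hence "compact_space (subtopology kcheck_top (Yt t))" using homeomorphic_compact_space[OF 2] by simp
  moreover have "Yt t \<subseteq> topspace kcheck_top" by (auto simp: topspace_kcheck Yt_def)
  ultimately show "compactin kcheck_top (Yt t)" by (simp add: compactin_subspace)
qed
end
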